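(* Let $n\ge1$ be an integer and $p>2$. Let $w$ be the fundamental solution of the $p$-Laplace equation in $\mathbb{R}^n$, i.e. \[w(x)=-c_{n,p}\tfrac{p-1}{p-n}|x|^{\frac{p-n}{p-1}}\ \text{ if } p\neq n,\qquad w(x)=-c_{n,n}\ln|x|\ \text{ if } p=n,\] with a constant $c_{n,p}>0$, and let $V(x):=\sum_{i=1}^N a_i w(x-y_i)$ with $N\ge1$, $a_i>0$, $y_i\in\mathbb{R}^n$. Then for every concave function $K\in C^2(\mathbb{R}^n)$, \[\Delta_p\big(V(x)+K(x)\big)\le 0\] at every point $x\in\mathbb{R}^n\setminus\{y_1,\dots,y_N\}$ where $\nabla V(x)+\nabla K(x)\neq0$ (i.e. wherever the left-hand side is defined).
   Context: For a function $u$ that is $C^2$ near $x$ with $\nabla u(x)\neq0$, the $p$-Laplacian is $\Delta_p u=|\nabla u|^{p-2}\Big((p-2)\frac{\nabla u\,(\mathcal{H}u)\,\nabla u^T}{|\nabla u|^2}+\Delta u\Big)$, where $\mathcal{H}u$ is the Hessian matrix of $u$. *)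

theory Defs
  imports "HOL-Analysis.Analysis"
begin

definition grad :: "(real^'n \<Rightarrow> real) \<Rightarrow> real^'n \<Rightarrow> real^'n" where
  "grad f x = (\<chi> i. frechet_derivative f (at x) (axis i 1))"

definition hess :: "(real^'n \<Rightarrow> real) \<Rightarrow> real^'n \<Rightarrow> real^'n^'n" where
  "hess f x = (\<chi> i j. frechet_derivative (\<lambda>y. grad f y $ i) (at x) (axis j 1))"

definition C2 :: "(real^'n \<Rightarrow> real) \<Rightarrow> bool" where
  "C2 f \<longleftrightarrow> (\<forall>x. f differentiable (at x)) \<and>
            (\<forall>x i. (\<lambda>y. grad f y $ i) differentiable (at x)) \<and>
            continuous_on UNIV (hess f)"

definition p_laplacian :: "real \<Rightarrow> (real^'n \<Rightarrow> real) \<Rightarrow> real^'n \<Rightarrow> real" where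
  "p_laplacian p u x =
     norm (grad u x) powr (p - 2) *
       ((p - 2) * (grad u x \<bullet> (hess u x *v grad u x)) / (norm (grad u x))\<^sup>2
        + trace (hess u x))"

definition fund_sol :: "real \<Rightarrow> real \<Rightarrow> real^'n \<Rightarrow> real" where
  "fund_sol c p x =
     (if p \<noteq> real CARD('n)
      then - c * (p - 1) / (p - real CARD('n)) * norm x powr ((p - real CARD('n)) / (p - 1))
      else - c * ln (norm x))"

end

theory Submission
  imports Defs
begin


lemma lin_expand:
  fixes D :: "real^'n \<Rightarrow> real"
  assumes "linear D"
  shows "D h = (\<Sum>j\<in>UNIV. h$j * D (axis j 1))"
proof -
  have "D h = D (\<Sum>j\<in>UNIV. (h$j) *s axis j 1)" by (simp add: basis_expansion)
  also have "\<dots> = (\<Sum>j\<in>UNIV. D ((h$j) *s axis j 1))" using assms by (simp add: linear_sum)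
  also have "\<dots> = (\<Sum>j\<in>UNIV. h$j * D (axis j 1))"
    using assms by (simp add: linear_scale scalar_mult_eq_scaleR)
  finally show ?thesis .
qed

lemma grad_eq:
  assumes "(f has_derivative (\<lambda>h. G \<bullet> h)) (at z)"
  shows "grad f z = G"
  using frechet_derivative_at[OF assms, symmetric]
  by (simp add: grad_def inner_axis vec_eq_iff)

lemma grad_has_derivative:
  assumes "f differentiable (at z)"
  shows "(f has_derivative (\<lambda>h. grad f z \<bullet> h)) (at z)"
proof -
  have d: "(f has_derivative frechet_derivative f (at z)) (at z)"
    using assms frechet_derivative_works by blast
  have l: "linear (frechet_derivative f (at z))" using has_derivative_linear[OF d] .
  have "frechet_derivative f (at z) = (\<lambda>h. grad f z \<bullet> h)"
    by (rule ext, subst lin_expand[OF l]) (simp add: grad_def inner_vec_def mult.commute)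
  with d show ?thesis by simp
qed



lemma concave_tangent:
  fixes K :: "real^'n \<Rightarrow> real"
  assumes conc: "concave_on UNIV K" and d: "K differentiable (at a)"
  shows "K b \<le> K a + grad K a \<bullet> (b - a)"
proof -
  define psi where "psi t = - K (a + t *\<^sub>R (b - a))" for t :: real
  have cv: "convex_on UNIV psi"
    unfolding convex_on_def psi_def
  proof (intro conjI ballI allI impI, simp)
    fix x y u v :: real assume uv: "0 \<le> u" "0 \<le> v" "u + v = 1"
    have e: "a + (u * x + v * y) *\<^sub>R (b - a) = u *\<^sub>R (a + x *\<^sub>R (b - a)) + v *\<^sub>R (a + y *\<^sub>R (b - a))"
    proof -
      have "a = u *\<^sub>R a + v *\<^sub>R a" using uv(3) by (metis scaleR_add_left scaleR_one)
      then show ?thesis by (simp add: algebra_simps)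
    qed
    have "- K (u *\<^sub>R (a + x *\<^sub>R (b - a)) + v *\<^sub>R (a + y *\<^sub>R (b - a)))
          \<le> u * - K (a + x *\<^sub>R (b - a)) + v * - K (a + y *\<^sub>R (b - a))"
      using conc uv unfolding concave_on_def convex_on_def by blast
    then show "- K (a + (u *\<^sub>R x + v *\<^sub>R y) *\<^sub>R (b - a)) \<le> u * - K (a + x *\<^sub>R (b - a)) + v * - K (a + y *\<^sub>R (b - a))"
      using e by simp
  qed
  have dK: "(K has_derivative (\<lambda>h. grad K a \<bullet> h)) (at a)" using grad_has_derivative[OF d] .
  have "((\<lambda>t. a + t *\<^sub>R (b - a)) has_derivative (\<lambda>t. t *\<^sub>R (b - a))) (at 0)"
    by (auto intro!: derivative_eq_intros)
  from has_derivative_compose[OF this, of K "\<lambda>h. grad K a \<bullet> h"] dK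
  have "((\<lambda>t. K (a + t *\<^sub>R (b - a))) has_derivative (\<lambda>t. grad K a \<bullet> (t *\<^sub>R (b - a)))) (at 0)"
    by (simp add: o_def)
  then have "(psi has_derivative (\<lambda>t. - (grad K a \<bullet> (t *\<^sub>R (b - a))))) (at 0)"
    unfolding psi_def by (rule has_derivative_minus)
  then have "(psi has_field_derivative (- (grad K a \<bullet> (b - a)))) (at 0 within UNIV)"
    unfolding has_field_derivative_def by (rule has_derivative_eq_rhs) (auto simp: fun_eq_iff)
  from convex_on_imp_above_tangent[OF cv _ _ _ this, of 1]
  have "psi 1 - psi 0 \<ge> - (grad K a \<bullet> (b - a))" by simp
  then show ?thesis by (simp add: psi_def)
qed

lemma concave_quadratic:
  fixes K :: "real^'n \<Rightarrow> real"
  assumes C: "C2 K" and conc: "concave_on UNIV K"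
  shows "(\<Sum>i\<in>UNIV. v$i * frechet_derivative (\<lambda>z. grad K z $ i) (at x) v) \<le> 0"
proof (rule ccontr)
  let ?F = "\<lambda>i. frechet_derivative (\<lambda>z. grad K z $ i) (at x)"
  assume neg: "\<not> ?thesis"
  define phi where "phi t = (\<Sum>i\<in>UNIV. v$i * grad K (x + t *\<^sub>R v) $ i)" for t :: real
  have dK: "\<And>z. K differentiable (at z)" using C unfolding C2_def by blast
  have dg: "\<And>i. ((\<lambda>z. grad K z $ i) has_derivative ?F i) (at x)"
    using C unfolding C2_def using frechet_derivative_works by blast
  have "\<And>i. ((\<lambda>t. grad K (x + t *\<^sub>R v) $ i) has_derivative (\<lambda>t. ?F i (t *\<^sub>R v))) (at 0)"
  proof -
    fix i
    have "((\<lambda>t. x + t *\<^sub>R v) has_derivative (\<lambda>t. t *\<^sub>R v)) (at 0)"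
      by (auto intro!: derivative_eq_intros)
    from has_derivative_compose[OF this, of "\<lambda>z. grad K z $ i" "?F i"] dg[of i]
    show "((\<lambda>t. grad K (x + t *\<^sub>R v) $ i) has_derivative (\<lambda>t. ?F i (t *\<^sub>R v))) (at 0)"
      by (simp add: o_def)
  qed
  then have "(phi has_derivative (\<lambda>t. \<Sum>i\<in>UNIV. v$i * ?F i (t *\<^sub>R v))) (at 0)"
    unfolding phi_def by (auto intro!: derivative_eq_intros)
  moreover have "(\<lambda>t. \<Sum>i\<in>UNIV. v$i * ?F i (t *\<^sub>R v)) = (\<lambda>t. (\<Sum>i\<in>UNIV. v$i * ?F i v) * t)"
  proof
    fix t
    have "\<And>i. ?F i (t *\<^sub>R v) = t * ?F i v"
      using dg has_derivative_linear linear_scale by (metis real_scaleR_def linear_cmul)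
    then show "(\<Sum>i\<in>UNIV. v$i * ?F i (t *\<^sub>R v)) = (\<Sum>i\<in>UNIV. v$i * ?F i v) * t"
      by (simp add: sum_distrib_left algebra_simps)
  qed
  ultimately have "DERIV phi 0 :> (\<Sum>i\<in>UNIV. v$i * ?F i v)"
    unfolding has_field_derivative_def by (metis (no_types, lifting) ext mult.commute)
  from DERIV_pos_inc_right[OF this] neg obtain d where d: "d > 0" "\<And>h. h > 0 \<Longrightarrow> h < d \<Longrightarrow> phi 0 < phi (0 + h)"
    by force
  define t where "t = d / 2"
  have t: "t > 0" "t < d" using d by (auto simp: t_def)
  have phin: "phi s = grad K (x + s *\<^sub>R v) \<bullet> v" for s
    by (simp add: phi_def inner_vec_def mult.commute)
  have 1: "K x \<le> K (x + t *\<^sub>R v) + grad K (x + t *\<^sub>R v) \<bullet> (x - (x + t *\<^sub>R v))"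
    using concave_tangent[OF conc dK] .
  have 2: "K (x + t *\<^sub>R v) \<le> K x + grad K x \<bullet> ((x + t *\<^sub>R v) - x)"
    using concave_tangent[OF conc dK] .
  from 1 2 have "t * (grad K (x + t *\<^sub>R v) \<bullet> v) \<le> t * (grad K x \<bullet> v)"
    by (simp add: inner_diff_right)
  then have "phi t \<le> phi 0" using t phin[of t] phin[of 0] by simp
  with d(2)[OF t] show False by simp
qed



definition bet :: "real \<Rightarrow> real" where
  "bet p = (real CARD('n) + p - 2) / (p - 1)"

lemma fs_deriv:
  fixes z :: "real^'n"
  assumes p: "p > 2" and z: "z \<noteq> 0"
  shows "(fund_sol c p has_derivative
          (\<lambda>h. (- c * norm z powr (- bet TYPE('n) p)) * (z \<bullet> h))) (at z)"
proof -
  let ?n = "real CARD('n)"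
  let ?b = "bet TYPE('n) p"
  have nz: "norm z > 0" using z by simp
  have nb: "norm z powr (- ?b) * (norm z)\<^sup>2 = norm z powr ((p - ?n) / (p - 1))"
  proof -
    have "(p - ?n) / (p - 1) = - ?b + 2" using p by (simp add: bet_def field_simps)
    moreover have "(norm z)\<^sup>2 = norm z powr 2" using nz by (simp add: powr_numeral)
    moreover have "norm z powr (- ?b + 2) = norm z powr (- ?b) * norm z powr 2" by (rule powr_add)
    ultimately show ?thesis by metis
  qed
  show ?thesis
  proof (cases "p = ?n")
    case False
    let ?g = "(p - ?n) / (p - 1)"
    have fs: "fund_sol c p = (\<lambda>x::real^'n. (- c * (p - 1) / (p - ?n)) * norm x powr ?g)"
      using False by (simp add: fun_eq_iff fund_sol_def)
    have "((\<lambda>x::real^'n. norm x powr ?g) has_derivative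
        (\<lambda>h. norm z powr ?g * (0 * ln (norm z) + (sgn z \<bullet> h) * ?g / norm z))) (at z)"
      using has_derivative_powr[OF has_derivative_norm[OF z] has_derivative_const[of ?g]] nz by (simp add: inner_commute)
    then have "((\<lambda>x::real^'n. (- c * (p - 1) / (p - ?n)) * norm x powr ?g) has_derivative
        (\<lambda>h. (- c * (p - 1) / (p - ?n)) * (norm z powr ?g * (0 * ln (norm z) + (sgn z \<bullet> h) * ?g / norm z)))) (at z)"
      by (rule has_derivative_mult_right)
    moreover
    { fix h
      have pn: "p - ?n \<noteq> 0" "p - 1 \<noteq> 0" using False p by auto
      have "(- c * (p - 1) / (p - ?n)) * (norm z powr ?g * (0 * ln (norm z) + (sgn z \<bullet> h) * ?g / norm z))
            = (- c * norm z powr (- ?b)) * (z \<bullet> h)"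
      proof -
        have sg: "sgn z \<bullet> h = (z \<bullet> h) / norm z" by (simp add: sgn_div_norm divide_inverse_commute)
        have ag: "(- c * (p - 1) / (p - ?n)) * ?g = - c" using pn by (simp add: divide_simps)
        have "(- c * (p - 1) / (p - ?n)) * (norm z powr ?g * (0 * ln (norm z) + (sgn z \<bullet> h) * ?g / norm z))
           = ((- c * (p - 1) / (p - ?n)) * ?g) * ((norm z powr (- ?b) * (norm z)\<^sup>2) * (z \<bullet> h) / (norm z * norm z))"
          unfolding nb[symmetric] sg by (simp add: field_simps)
        also have "\<dots> = (- c * norm z powr (- ?b)) * (z \<bullet> h)"
          unfolding ag using nz by (simp add: power2_eq_square)
        finally show ?thesis .
      qed }
    ultimately show ?thesis unfolding fs by (simp add: has_derivative_eq_rhs fun_eq_iff)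
  next
    case True
    have b2: "?b = 2" using True p by (simp add: bet_def field_simps)
    have fs: "fund_sol c p = (\<lambda>x::real^'n. - c * ln (norm x))"
      using True by (simp add: fun_eq_iff fund_sol_def)
    have "((\<lambda>x::real^'n. ln (norm x)) has_derivative (\<lambda>h. inverse (norm z) * (sgn z \<bullet> h))) (at z)"
      using has_derivative_ln[OF _ has_derivative_norm[OF z]] nz by (simp add: inner_commute mult.commute)
    then have "((\<lambda>x::real^'n. - c * ln (norm x)) has_derivative (\<lambda>h. - c * (inverse (norm z) * (sgn z \<bullet> h)))) (at z)"
      by (rule has_derivative_mult_right)
    moreover
    { fix h
      have "- c * (inverse (norm z) * (sgn z \<bullet> h)) = (- c * norm z powr (- ?b)) * (z \<bullet> h)"
      proof -
        have sg: "sgn z \<bullet> h = (z \<bullet> h) / norm z" by (simp add: sgn_div_norm divide_inverse_commute)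
        have pw: "norm z powr (- 2) = inverse (norm z * norm z)"
          using nz by (simp add: powr_minus powr_numeral power2_eq_square)
        show ?thesis unfolding b2 sg pw by (simp add: field_simps)
      qed }
    ultimately show ?thesis unfolding fs by (simp add: has_derivative_eq_rhs fun_eq_iff)
  qed
qed



lemma gw_comp_deriv:
  fixes z y :: "real^'n"
  assumes zy: "z \<noteq> y"
  shows "((\<lambda>u. (- c * norm (u - y) powr (- b)) * (u - y) $ i) has_derivative
     (\<lambda>h. - c * (norm (z - y) powr (- b) * h $ i
          - b * norm (z - y) powr (- b - 2) * ((z - y) \<bullet> h) * (z - y) $ i))) (at z)"
proof -
  let ?v = "z - y"
  have v: "?v \<noteq> 0" using zy by simp
  have nv: "norm ?v > 0" using v by simp
  have dd: "((\<lambda>u. u - y) has_derivative (\<lambda>h. h)) (at z)"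
    by (auto intro!: derivative_eq_intros)
  have dn: "((\<lambda>u. norm (u - y)) has_derivative (\<lambda>h. sgn ?v \<bullet> h)) (at z)"
    using has_derivative_compose[OF dd has_derivative_norm[OF v]] by (simp add: o_def inner_commute)
  have dp: "((\<lambda>u. norm (u - y) powr (- b)) has_derivative
      (\<lambda>h. norm ?v powr (- b) * (0 * ln (norm ?v) + (sgn ?v \<bullet> h) * (- b) / norm ?v))) (at z)"
    using has_derivative_powr[OF dn has_derivative_const[of "- b"]] nv by simp
  have dc: "((\<lambda>u. (u - y) $ i) has_derivative (\<lambda>h. h $ i)) (at z)"
    using bounded_linear.has_derivative[OF bounded_linear_vec_nth dd] .
  have dm: "((\<lambda>u. (- c * norm (u - y) powr (- b)) * (u - y) $ i) has_derivative
     (\<lambda>h. (- c * norm ?v powr (- b)) * h $ i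
        + (- c * (norm ?v powr (- b) * (0 * ln (norm ?v) + (sgn ?v \<bullet> h) * (- b) / norm ?v))) * ?v $ i)) (at z)"
    using has_derivative_mult[OF has_derivative_mult_right[OF dp, of "- c"] dc]
    by (simp add: algebra_simps)
  have pw: "norm ?v powr (- b - 2) = norm ?v powr (- b) / (norm ?v * norm ?v)"
  proof -
    have "norm ?v powr (- b - 2) = norm ?v powr (- b) / norm ?v powr 2" by (rule powr_diff)
    moreover have "norm ?v powr 2 = norm ?v * norm ?v" using nv by (simp add: powr_numeral power2_eq_square)
    ultimately show ?thesis by simp
  qed
  have sg: "\<And>h. sgn ?v \<bullet> h = (?v \<bullet> h) / norm ?v" by (simp add: sgn_div_norm divide_inverse_commute)
  show ?thesis
    using dm by (rule has_derivative_eq_rhs) (auto simp: fun_eq_iff pw sg field_simps)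
qed

lemma alg_key:
  fixes c p b n s r G V X :: real
  assumes c: "c > 0" and p: "p > 2" and b: "b * (p - 1) = n + p - 2" and bp: "b > 0"
    and G: "G > 0" and V: "V > 0" and CS: "X\<^sup>2 \<le> V * G" and s: "s > 0" and r: "r * V = s"
  shows "(p - 2) * (- c * (s * G - b * r * X\<^sup>2)) / G + (- c * (s * n - b * r * V)) \<le> 0"
proof -
  have "r = s / V" using r V by (simp add: field_simps)
  then have r0: "r > 0" using s V by simp
  have q: "r * X\<^sup>2 / G \<le> s"
  proof -
    have "r * X\<^sup>2 \<le> r * (V * G)" using CS r0 by (simp add: mult_left_mono)
    then have "r * X\<^sup>2 / G \<le> r * V" using G by (simp add: divide_le_eq mult.assoc)
    then show ?thesis using r by simp
  qed
  have e: "(p - 2) * (- c * (s * G - b * r * X\<^sup>2)) / G + (- c * (s * n - b * r * V))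
      = - c * ((p - 2) * (s - b * (r * X\<^sup>2 / G)) + s * n - b * s)"
    using G r by (simp add: field_simps)
  have "(p - 2) * (s - b * (r * X\<^sup>2 / G)) \<ge> (p - 2) * (s - b * s)"
  proof -
    have "b * (r * X\<^sup>2 / G) \<le> b * s" using mult_left_mono[OF q, of b] bp by simp
    then show ?thesis using p by (intro mult_left_mono) auto
  qed
  moreover have "(p - 2) * (s - b * s) + s * n - b * s = s * (n + p - 2 - b * (p - 1))"
    by (simp add: algebra_simps)
  ultimately have "(p - 2) * (s - b * (r * X\<^sup>2 / G)) + s * n - b * s \<ge> 0"
    using b by simp
  then show ?thesis unfolding e using c by (simp add: mult_nonneg_nonneg)
qed



lemma sum_lin:
  fixes g w v :: "real^'n"
  shows "(\<Sum>i\<in>UNIV. g$i * (A * (C * (s * w$i - B * v$i)))) = A * (C * (s * (g \<bullet> w) - B * (g \<bullet> v)))"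
  by (simp add: inner_vec_def sum_distrib_left sum_subtractf algebra_simps)

lemma sum_tr:
  fixes v :: "real^'n"
  shows "(\<Sum>i\<in>UNIV. A * (C * (s * (axis i 1 :: real^'n)$i - B * (v \<bullet> axis i 1) * v$i)))
     = A * (C * (s * real CARD('n) - B * (v \<bullet> v)))"
proof -
  have e: "\<And>i. v \<bullet> axis i 1 = v$i" by (simp add: inner_axis)
  show ?thesis unfolding e by (simp add: inner_vec_def sum_distrib_left sum_subtractf algebra_simps)
qed

lemma pw_lemma:
  fixes v :: "real^'n"
  assumes "v \<noteq> 0"
  shows "norm v powr (- b - 2) * (v \<bullet> v) = norm v powr (- b)"
proof -
  have nv: "norm v > 0" using assms by simp
  have "norm v powr (- b - 2) = norm v powr (- b) / norm v powr 2" by (rule powr_diff)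
  moreover have "norm v powr 2 = v \<bullet> v" using nv by (simp add: powr_numeral power2_norm_eq_inner)
  moreover have "v \<bullet> v > 0" using assms by simp
  ultimately show ?thesis by simp
qed

theorem lemma4p1:
  fixes p c :: real and N :: nat and a :: "nat \<Rightarrow> real"
    and y :: "nat \<Rightarrow> real^'n" and K :: "real^'n \<Rightarrow> real" and x :: "real^'n"
  assumes "p > 2" and "c > 0" and "N \<ge> 1"
    and "\<forall>i<N. a i > 0"
    and "C2 K" and "concave_on UNIV K"
    and "x \<notin> y ` {..<N}"
    and "grad (\<lambda>z. (\<Sum>i<N. a i * fund_sol c p (z - y i)) + K z) x \<noteq> 0"
  shows "p_laplacian p (\<lambda>z. (\<Sum>i<N. a i * fund_sol c p (z - y i)) + K z) x \<le> 0"
proof -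
  let ?n = "real CARD('n)"
  define b where "b = bet TYPE('n) p"
  define u where "u = (\<lambda>z. (\<Sum>i<N. a i * fund_sol c p (z - y i)) + K z)"
  define S where "S = UNIV - y ` {..<N}"
  have oS: "open S" unfolding S_def by (intro open_Diff finite_imp_closed) auto
  have xS: "x \<in> S" using assms(7) S_def by simp
  have dK: "\<And>z. K differentiable (at z)" using assms(5) unfolding C2_def by blast
  define G where "G z = (\<Sum>k<N. a k *\<^sub>R ((- c * norm (z - y k) powr (- b)) *\<^sub>R (z - y k))) + grad K z" for z
  have du: "(u has_derivative (\<lambda>h. G z \<bullet> h)) (at z)" if zS: "z \<in> S" for z
  proof -
    have dd: "((\<lambda>u. u - y k) has_derivative (\<lambda>h. h)) (at z)" for k
      by (auto intro!: derivative_eq_intros)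
    have dk: "((\<lambda>u. fund_sol c p (u - y k)) has_derivative (\<lambda>h. (- c * norm (z - y k) powr (- b)) * ((z - y k) \<bullet> h))) (at z)"
      if "k \<in> {..<N}" for k
    proof -
      have "z - y k \<noteq> 0" using zS that S_def by auto
      from has_derivative_compose[OF dd fs_deriv[OF assms(1) this]] show ?thesis
        by (simp add: o_def b_def)
    qed
    have "((\<lambda>u. \<Sum>k<N. a k * fund_sol c p (u - y k)) has_derivative
        (\<lambda>h. \<Sum>k<N. a k * ((- c * norm (z - y k) powr (- b)) * ((z - y k) \<bullet> h)))) (at z)"
      by (intro has_derivative_sum has_derivative_mult_right dk)
    from has_derivative_add[OF this grad_has_derivative[OF dK]] show ?thesis unfolding u_def
      by (rule has_derivative_eq_rhs) (simp add: fun_eq_iff G_def inner_add_left inner_sum_left algebra_simps)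
  qed
  have gS: "grad u z = G z" if "z \<in> S" for z using grad_eq[OF du[OF that]] .
  define FK where "FK i = frechet_derivative (\<lambda>z. grad K z $ i) (at x)" for i
  define L where "L i h = (\<Sum>k<N. a k * (- c * (norm (x - y k) powr (- b) * h $ i
          - b * norm (x - y k) powr (- b - 2) * ((x - y k) \<bullet> h) * (x - y k) $ i))) + FK i h" for i h
  have dFK: "((\<lambda>z. grad K z $ i) has_derivative FK i) (at x)" for i
    using assms(5) unfolding C2_def FK_def using frechet_derivative_works by blast
  have dL: "((\<lambda>z. grad u z $ i) has_derivative L i) (at x)" for i
  proof -
    have Gi: "G z $ i = (\<Sum>k<N. a k * ((- c * norm (z - y k) powr (- b)) * (z - y k) $ i)) + grad K z $ i" for z
      by (simp add: G_def mult.assoc)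
    have "((\<lambda>z. (\<Sum>k<N. a k * ((- c * norm (z - y k) powr (- b)) * (z - y k) $ i)) + grad K z $ i)
          has_derivative L i) (at x)"
    proof -
      have "k \<in> {..<N} \<Longrightarrow> x \<noteq> y k" for k using assms(7) by auto
      then have "((\<lambda>z. (\<Sum>k<N. a k * ((- c * norm (z - y k) powr (- b)) * (z - y k) $ i)) + grad K z $ i)
          has_derivative (\<lambda>h. (\<Sum>k<N. a k * (- c * (norm (x - y k) powr (- b) * h $ i
          - b * norm (x - y k) powr (- b - 2) * ((x - y k) \<bullet> h) * (x - y k) $ i))) + FK i h)) (at x)"
        by (intro has_derivative_add has_derivative_sum has_derivative_mult_right gw_comp_deriv dFK) auto
      then show ?thesis by (simp add: L_def[abs_def])
    qed
    then have "((\<lambda>z. G z $ i) has_derivative L i) (at x)" unfolding Gi .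
    from has_derivative_transform_within_open[OF this oS xS] show ?thesis using gS by simp
  qed
  have linL: "linear (L i)" for i using has_derivative_linear[OF dL] .
  have H: "hess u x = (\<chi> i j. L i (axis j 1))"
    using frechet_derivative_at[OF dL] by (simp add: hess_def)
  have Hv: "hess u x *v v = (\<chi> i. L i v)" for v
    by (simp add: H matrix_vector_mult_def vec_eq_iff lin_expand[OF linL, of _ v] mult.commute)
  have tr: "trace (hess u x) = (\<Sum>i\<in>UNIV. L i (axis i 1))" by (simp add: H trace_def)
  define g where "g = grad u x"
  have g0: "g \<noteq> 0" using assms(8) u_def g_def by simp
  have q: "g \<bullet> (hess u x *v g) = (\<Sum>i\<in>UNIV. g$i * L i g)" by (simp add: Hv inner_vec_def)
  define V where "V k = x - y k" for k
  define s where "s k = norm (V k) powr (- b)" for k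
  define r where "r k = norm (V k) powr (- b - 2)" for k
  define T1 where "T1 k i = a k * (- c * (s k * g $ i - (b * r k * (V k \<bullet> g)) * V k $ i))" for k i
  define T2 where "T2 k i = a k * (- c * (s k * (axis i 1 :: real^'n) $ i - (b * r k) * (V k \<bullet> axis i 1) * V k $ i))" for k i
  define t1 where "t1 k = - c * (s k * (g \<bullet> g) - b * r k * (V k \<bullet> g)\<^sup>2)" for k
  define t2 where "t2 k = - c * (s k * ?n - b * r k * (V k \<bullet> V k))" for k
  define K1 where "K1 = (\<Sum>i\<in>UNIV. g$i * FK i g)"
  define K2 where "K2 = (\<Sum>i\<in>UNIV. FK i (axis i 1))"
  have L1: "L i g = (\<Sum>k<N. T1 k i) + FK i g" for i
    by (simp add: L_def T1_def s_def r_def V_def mult.assoc)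
  have L2: "L i (axis i 1) = (\<Sum>k<N. T2 k i) + FK i (axis i 1)" for i
    by (simp add: L_def T2_def s_def r_def V_def mult.assoc)
  have sT1: "(\<Sum>i\<in>UNIV. g$i * T1 k i) = a k * t1 k" for k
    unfolding T1_def t1_def sum_lin by (simp add: inner_commute power2_eq_square)
  have sT2: "(\<Sum>i\<in>UNIV. T2 k i) = a k * t2 k" for k
    unfolding T2_def t2_def sum_tr by simp
  have Q1: "(\<Sum>i\<in>UNIV. g$i * L i g) = (\<Sum>k<N. a k * t1 k) + K1"
  proof -
    have "(\<Sum>i\<in>UNIV. g$i * L i g) = (\<Sum>i\<in>UNIV. \<Sum>k<N. g$i * T1 k i) + K1"
      by (simp add: L1 K1_def distrib_left sum.distrib sum_distrib_left)
    also have "(\<Sum>i\<in>UNIV. \<Sum>k<N. g$i * T1 k i) = (\<Sum>k<N. \<Sum>i\<in>UNIV. g$i * T1 k i)"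
      by (rule sum.swap)
    finally show ?thesis by (simp add: sT1)
  qed
  have Q2: "(\<Sum>i\<in>UNIV. L i (axis i 1)) = (\<Sum>k<N. a k * t2 k) + K2"
  proof -
    have "(\<Sum>i\<in>UNIV. L i (axis i 1)) = (\<Sum>i\<in>UNIV. \<Sum>k<N. T2 k i) + K2"
      by (simp add: L2 K2_def sum.distrib)
    also have "(\<Sum>i\<in>UNIV. \<Sum>k<N. T2 k i) = (\<Sum>k<N. \<Sum>i\<in>UNIV. T2 k i)"
      by (rule sum.swap)
    finally show ?thesis by (simp add: sT2)
  qed
  define GG where "GG = g \<bullet> g"
  have GG: "GG > 0" using g0 GG_def by simp
  have br: "(p - 2) * ((\<Sum>k<N. a k * t1 k) + K1) / GG + ((\<Sum>k<N. a k * t2 k) + K2)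
      = (\<Sum>k<N. a k * ((p - 2) * t1 k / GG + t2 k)) + ((p - 2) * K1 / GG + K2)"
  proof -
    have "(\<Sum>k<N. a k * ((p - 2) * t1 k / GG + t2 k)) = (\<Sum>k<N. ((p - 2) / GG) * (a k * t1 k) + a k * t2 k)"
      by (rule sum.cong) (auto simp: field_simps)
    also have "\<dots> = ((p - 2) / GG) * (\<Sum>k<N. a k * t1 k) + (\<Sum>k<N. a k * t2 k)"
      by (simp add: sum.distrib sum_distrib_left)
    finally have e: "(\<Sum>k<N. a k * ((p - 2) * t1 k / GG + t2 k)) = ((p - 2) / GG) * (\<Sum>k<N. a k * t1 k) + (\<Sum>k<N. a k * t2 k)" .
    have ab: "\<And>P S1 K1 G S2 K2::real. P * (S1 + K1) / G + (S2 + K2) = (P / G * S1 + S2) + (P * K1 / G + K2)"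
      by (simp add: add_divide_distrib distrib_left)
    show ?thesis unfolding e by (rule ab)
  qed
  have bpos: "b > 0" and beq: "b * (p - 1) = ?n + p - 2"
    using assms(1) by (auto simp: b_def bet_def)
  have termk: "a k * ((p - 2) * t1 k / GG + t2 k) \<le> 0" if k: "k \<in> {..<N}" for k
  proof -
    have Vk: "V k \<noteq> 0" using assms(7) k V_def by auto
    have "(p - 2) * t1 k / GG + t2 k \<le> 0"
      unfolding t1_def t2_def GG_def[symmetric]
    proof (rule alg_key[OF assms(2) assms(1) beq bpos GG])
      show "V k \<bullet> V k > 0" using Vk by simp
      show "(V k \<bullet> g)\<^sup>2 \<le> V k \<bullet> V k * GG" unfolding GG_def by (rule Cauchy_Schwarz_ineq)
      show "s k > 0" using Vk by (simp add: s_def)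
      show "r k * (V k \<bullet> V k) = s k" using pw_lemma[OF Vk] by (simp add: r_def s_def)
    qed
    then show ?thesis using assms(4) k by (simp add: mult_nonneg_nonpos less_imp_le)
  qed
  have K1n: "K1 \<le> 0" unfolding K1_def FK_def using concave_quadratic[OF assms(5,6)] .
  have K2n: "K2 \<le> 0" unfolding K2_def
  proof (rule sum_nonpos)
    fix i
    have "(\<Sum>j\<in>UNIV. (axis i 1 :: real^'n)$j * FK j (axis i 1)) \<le> 0"
      unfolding FK_def using concave_quadratic[OF assms(5,6)] .
    moreover have "(\<Sum>j\<in>UNIV. (axis i 1 :: real^'n)$j * FK j (axis i 1)) = FK i (axis i 1)"
    proof -
      have "(\<Sum>j\<in>UNIV. (axis i 1 :: real^'n)$j * FK j (axis i 1)) = (\<Sum>j\<in>UNIV. if j = i then FK j (axis i 1) else 0)"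
        by (rule sum.cong) (auto simp: axis_def)
      then show ?thesis by simp
    qed
    ultimately show "FK i (axis i 1) \<le> 0" by simp
  qed
  have Kn: "(p - 2) * K1 / GG + K2 \<le> 0"
    using K1n K2n GG assms(1) by (simp add: divide_nonpos_pos mult_nonneg_nonpos add_nonpos_nonpos)
  have brn: "(p - 2) * (g \<bullet> (hess u x *v g)) / (norm g)\<^sup>2 + trace (hess u x) \<le> 0"
    unfolding q tr Q1 Q2 power2_norm_eq_inner GG_def[symmetric] br
  proof -
    have "(\<Sum>k<N. a k * ((p - 2) * t1 k / GG + t2 k)) \<le> 0" by (rule sum_nonpos) (rule termk)
    then show "(\<Sum>k<N. a k * ((p - 2) * t1 k / GG + t2 k)) + ((p - 2) * K1 / GG + K2) \<le> 0"
      using Kn by simp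
  qed
  have "p_laplacian p u x \<le> 0"
    unfolding p_laplacian_def g_def[symmetric] using brn by (simp add: mult_nonneg_nonpos)
  then show ?thesis unfolding u_def .
qed

end
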